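(* Let $h(x)=\mathrm{ReLU}(\Gamma^*W^*x+\beta^* )$ be any one-layer ReLU network with $x\in\mathbb{R}^d$, $W^*\in\mathbb{R}^{d\times d}$, $\Gamma^*\in\mathbb{R}^{d\times d}$ diagonal, and $\beta^*\in\mathbb{R}^d$. Consider the two-layer network with batch normalization $$f(x)=\mathrm{ReLU}\Big(\Gamma'\,\frac{V\,\mathrm{ReLU}\big(\Gamma\frac{Wx-\mu}{s}+\beta\big)-\mu'}{s'}+\beta'\Big).$$ Its parameters are: - frozen: $W\in\mathbb{R}^{d^2\times d}$ and $V\in\mathbb{R}^{d\times d^2}$ random; $\mu\in\mathbb{R}^{d^2}$, $\mu'\in\mathbb{R}^d$ and nonzero scalars $s,s'$ fixed; - tunable: diagonal $\Gamma\in\mathbb{R}^{d^2\times d^2}$, $\Gamma'\in\mathbb{R}^{d\times d}$, and vectors $\beta\in\mathbb{R}^{d^2}$, $\beta'\in\mathbb{R}^d$. Then, with probability $1$ over the draw of $W$ and $V$, there exist $\Gamma,\beta,\Gamma',\beta'$ such that $f(x)=h(x)$ for all $x\in\mathbb{R}^d$ with $\|x\|_2\le1$.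
   Context: $\mathrm{ReLU}(t)=\max(t,0)$ is applied entrywise. "Random" matrices have independent, identically distributed entries drawn from an arbitrary continuous and bounded distribution, independently across matrices. In $\frac{Wx-\mu}{s}$ the subtraction is of vectors and the division is by the scalar $s$ (batch statistics are treated as fixed constants). *)

theory Defs
  imports "HOL-Probability.Probability"
begin

definition relu :: "real \<Rightarrow> real" where
  "relu t = max t 0"

definition cont_bounded_dist :: "real measure \<Rightarrow> bool" where
  "cont_bounded_dist D \<longleftrightarrow> prob_space D \<and> sets D = sets borel \<and>
     (\<forall>a. measure D {a} = 0) \<and> (\<exists>B. AE t in D. \<bar>t\<bar> \<le> B)"

text \<open>Target one-layer net h(x) = ReLU(Gamma* W* x + beta*), coordinate i < d.
  The diagonal matrix Gamma* is given by its diagonal gs.\<close>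
definition one_layer :: "nat \<Rightarrow> (nat \<times> nat \<Rightarrow> real) \<Rightarrow> (nat \<Rightarrow> real) \<Rightarrow> (nat \<Rightarrow> real)
    \<Rightarrow> (nat \<Rightarrow> real) \<Rightarrow> nat \<Rightarrow> real" where
  "one_layer d Ws gs bs x i = relu (gs i * (\<Sum>j<d. Ws (i, j) * x j) + bs i)"

text \<open>Two-layer BN net; W is d^2 x d (entries W (k,j)), V is d x d^2 (entries V (i,k)).
  Diagonal Gamma, Gamma' are given by their diagonals g, g'.\<close>
definition bn_two_layer :: "nat \<Rightarrow> (nat \<times> nat \<Rightarrow> real) \<Rightarrow> (nat \<times> nat \<Rightarrow> real)
    \<Rightarrow> (nat \<Rightarrow> real) \<Rightarrow> real \<Rightarrow> (nat \<Rightarrow> real) \<Rightarrow> real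
    \<Rightarrow> (nat \<Rightarrow> real) \<Rightarrow> (nat \<Rightarrow> real) \<Rightarrow> (nat \<Rightarrow> real) \<Rightarrow> (nat \<Rightarrow> real)
    \<Rightarrow> (nat \<Rightarrow> real) \<Rightarrow> nat \<Rightarrow> real" where
  "bn_two_layer d W V mu s mu' s' g b g' b' x i =
     (let z = (\<lambda>k. relu (g k * (((\<Sum>j<d. W (k, j) * x j) - mu k) / s) + b k))
      in relu (g' i * (((\<Sum>k<d^2. V (i, k) * z k) - mu' i) / s') + b' i))"

end

theory Submission
  imports Defs "Jordan_Normal_Form.Determinant"
begin

inductive polyfun :: "'i set \<Rightarrow> (('i \<Rightarrow> real) \<Rightarrow> real) \<Rightarrow> bool" for I where
  pconst: "polyfun I (\<lambda>x. c)"
| pvar: "i \<in> I \<Longrightarrow> polyfun I (\<lambda>x. x i)"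
| padd: "polyfun I p \<Longrightarrow> polyfun I q \<Longrightarrow> polyfun I (\<lambda>x. p x + q x)"
| pmult: "polyfun I p \<Longrightarrow> polyfun I q \<Longrightarrow> polyfun I (\<lambda>x. p x * q x)"

lemma polyfun_sum: "(\<And>s. s \<in> S \<Longrightarrow> polyfun I (f s)) \<Longrightarrow> polyfun I (\<lambda>x. \<Sum>s\<in>S. f s x)"
proof (induction S rule: infinite_finite_induct)
  case (infinite A) then show ?case by (simp add: pconst)
next
  case empty then show ?case by (simp add: pconst)
next
  case (insert s F) then show ?case by (simp add: padd)
qed

lemma polyfun_prod: "(\<And>s. s \<in> S \<Longrightarrow> polyfun I (f s)) \<Longrightarrow> polyfun I (\<lambda>x. \<Prod>s\<in>S. f s x)"
proof (induction S rule: infinite_finite_induct)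
  case (infinite A) then show ?case by (simp add: pconst)
next
  case empty then show ?case by (simp add: pconst)
next
  case (insert s F) then show ?case by (simp add: pmult)
qed

lemma polyfun_local: "polyfun I p \<Longrightarrow> (\<And>i. i \<in> I \<Longrightarrow> x i = y i) \<Longrightarrow> p x = p y"
  by (induction rule: polyfun.induct) auto

lemma polyfun_meas:
  assumes "polyfun I p" "I \<subseteq> J" "\<And>i. sets (M i) = sets borel"
  shows "p \<in> borel_measurable (PiM J M)"
  using assms(1)
proof (induction rule: polyfun.induct)
  case (pvar i)
  have "(\<lambda>x. x i) \<in> PiM J M \<rightarrow>\<^sub>M M i"
    using pvar assms(2) by (intro measurable_component_singleton) auto
  then show ?case using assms(3) measurable_cong_sets by blast
qed auto

lemma polyfun_decomp:
  assumes "polyfun (insert i I) p"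
  shows "\<exists>P. (\<forall>n. polyfun I (\<lambda>x. coeff (P x) n)) \<and> (\<forall>x. p x = poly (P x) (x i))"
  using assms
proof (induction rule: polyfun.induct)
  case (pconst c)
  show ?case
    by (rule exI[of _ "\<lambda>x. [:c:]"]) (auto simp: coeff_pCons polyfun.pconst split: nat.split)
next
  case (pvar j)
  show ?case
  proof (cases "j = i")
    case True
    show ?thesis
      by (rule exI[of _ "\<lambda>x. [:0, 1:]"]) (auto simp: True coeff_pCons polyfun.pconst split: nat.split)
  next
    case False
    then have j: "j \<in> I" using pvar by auto
    show ?thesis
      by (rule exI[of _ "\<lambda>x. [:x j:]"]) (auto simp: coeff_pCons intro!: allI, case_tac n, auto intro: polyfun.pconst polyfun.pvar j)
  qed
next
  case (padd p q)
  then obtain P Q where "\<forall>n. polyfun I (\<lambda>x. coeff (P x) n)" "\<forall>x. p x = poly (P x) (x i)"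
    "\<forall>n. polyfun I (\<lambda>x. coeff (Q x) n)" "\<forall>x. q x = poly (Q x) (x i)" by blast
  then show ?case
    by (intro exI[of _ "\<lambda>x. P x + Q x"]) (auto intro: polyfun.padd)
next
  case (pmult p q)
  then obtain P Q where "\<forall>n. polyfun I (\<lambda>x. coeff (P x) n)" "\<forall>x. p x = poly (P x) (x i)"
    "\<forall>n. polyfun I (\<lambda>x. coeff (Q x) n)" "\<forall>x. q x = poly (Q x) (x i)" by blast
  then show ?case
    by (intro exI[of _ "\<lambda>x. P x * Q x"]) (auto simp: coeff_mult intro!: polyfun_sum polyfun.pmult)
qed

lemma pred_nonzero:
  fixes f :: "'a \<Rightarrow> real"
  assumes "f \<in> borel_measurable N"
  shows "{x \<in> space N. f x \<noteq> 0} \<in> sets N"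
proof -
  have "f -` (- {0}) \<inter> space N \<in> sets N"
    by (rule measurable_sets[OF assms]) (intro borel_open open_Compl closed_singleton)
  moreover have "f -` (- {0}) \<inter> space N = {x \<in> space N. f x \<noteq> 0}" by auto
  ultimately show ?thesis by simp
qed

lemma AE_not_finite:
  fixes M :: "real measure"
  assumes "prob_space M" "sets M = sets borel" "\<And>a. measure M {a} = 0" "finite F"
  shows "AE t in M. t \<notin> F"
proof (rule AE_I')
  interpret prob_space M by fact
  have sing: "\<And>a. {a} \<in> sets M" using assms(2) by (simp add: borel_closed closed_singleton)
  have "emeasure M F = (\<Sum>a\<in>F. emeasure M {a})"
    using assms(4) sing by (intro emeasure_eq_sum_singleton) auto
  also have "\<dots> = 0" using assms(3) by (simp add: emeasure_eq_measure)
  finally have e: "emeasure M F = 0" .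
  have "F \<in> sets M" using assms(2,4) by (simp add: borel_closed finite_imp_closed)
  with e show "F \<in> null_sets M" by (simp add: null_sets_def)
qed auto

lemma polyfun_AE:
  fixes M :: "'i \<Rightarrow> real measure"
  assumes "finite I" and M: "\<And>i. prob_space (M i)" "\<And>i. sets (M i) = sets borel"
    "\<And>i a. measure (M i) {a} = 0"
  shows "polyfun I p \<Longrightarrow> p x0 \<noteq> 0 \<Longrightarrow> AE x in PiM I M. p x \<noteq> 0"
  using assms(1)
proof (induction I arbitrary: p x0 rule: finite_induct)
  case empty
  have "\<And>x. p x = p x0" by (rule polyfun_local[OF empty.prems(1)]) simp
  then show ?case using empty.prems(2) by (intro AE_I2) metis
next
  case (insert i I)
  obtain P where P: "\<And>n. polyfun I (\<lambda>x. coeff (P x) n)" "\<And>x. p x = poly (P x) (x i)"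
    using polyfun_decomp[OF insert.prems(1)] by blast
  have "P x0 \<noteq> 0" using insert.prems(2) P(2)[of x0] by auto
  then obtain n where n: "coeff (P x0) n \<noteq> 0" by (metis leading_coeff_0_iff)
  have IH: "AE X in PiM I M. coeff (P X) n \<noteq> 0"
    by (rule insert.IH[OF P(1) n])
  have Pupd: "P (X(i:=t)) = P X" for X t
    by (rule poly_eqI, rule polyfun_local[OF P(1)]) (use insert.hyps(2) in auto)
  interpret pair_sigma_finite "M i" "PiM I M"
    using M(1) by (intro pair_sigma_finite.intro prob_space_imp_sigma_finite prob_space_PiM) auto
  have pmeas: "p \<in> borel_measurable (PiM (insert i I) M)"
    by (rule polyfun_meas[OF insert.prems(1) subset_refl M(2)])
  have umeas: "(\<lambda>(t, X). X(i := t)) \<in> M i \<Otimes>\<^sub>M PiM I M \<rightarrow>\<^sub>M PiM (insert i I) M"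
    by measurable
  have eq: "distr (M i \<Otimes>\<^sub>M PiM I M) (PiM (insert i I) M) (\<lambda>(t, X). X(i := t)) = PiM (insert i I) M"
    using M(1) by (intro distr_pair_PiM_eq_PiM) auto
  have cmeas: "(\<lambda>x. p ((snd x)(i := fst x))) \<in> borel_measurable (M i \<Otimes>\<^sub>M PiM I M)"
    using measurable_comp[OF umeas pmeas] unfolding comp_def case_prod_beta .
  have S: "{x \<in> space (M i \<Otimes>\<^sub>M PiM I M). p ((snd x)(i := fst x)) \<noteq> 0} \<in> sets (M i \<Otimes>\<^sub>M PiM I M)"
    by (rule pred_nonzero[OF cmeas])
  have "AE X in PiM I M. AE t in M i. p (X(i:=t)) \<noteq> 0"
    using IH
  proof eventually_elim
    case (elim X)
    then have "P X \<noteq> 0" by auto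
    then have "finite {t. poly (P X) t = 0}" by (rule poly_roots_finite)
    from AE_not_finite[OF M(1,2,3) this] show ?case
      by eventually_elim (simp add: P(2) Pupd)
  qed
  then have A1: "AE t in M i. AE X in PiM I M. p (X(i:=t)) \<noteq> 0"
    using AE_commute[of "\<lambda>t X. p (X(i:=t)) \<noteq> 0", OF S] by blast
  have "AE x in M i \<Otimes>\<^sub>M PiM I M. p ((snd x)(i := fst x)) \<noteq> 0"
    by (rule AE_pair_measure[OF S]) (simp add: A1)
  then have A2: "AE x in M i \<Otimes>\<^sub>M PiM I M. p ((\<lambda>(t, X). X(i := t)) x) \<noteq> 0"
    by (simp add: case_prod_beta)
  have "AE x in distr (M i \<Otimes>\<^sub>M PiM I M) (PiM (insert i I) M) (\<lambda>(t, X). X(i := t)). p x \<noteq> 0"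
    using AE_distr_iff[OF umeas pred_nonzero[OF pmeas]] A2 by blast
  then show ?case by (simp only: eq)
qed

definition Amat :: "nat \<Rightarrow> (nat \<times> nat \<Rightarrow> real) \<Rightarrow> (nat \<times> nat \<Rightarrow> real) \<Rightarrow> real mat" where
  "Amat d W V = Matrix.mat (d^2) (d^2) (\<lambda>(r,k). V (r div d, k) * W (k, r mod d))"

definition Fdet :: "nat \<Rightarrow> (nat \<times> nat \<Rightarrow> real) \<Rightarrow> (nat \<times> nat \<Rightarrow> real) \<Rightarrow> real" where
  "Fdet d W V = Determinant.det (Amat d W V)"

lemma Amat_carrier: "Amat d W V \<in> carrier_mat (d^2) (d^2)"
  unfolding Amat_def by simp

lemma Fdet_expand: "Fdet d W V = (\<Sum>p | p permutes {0..<d^2}. of_int (sign p) *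
    (\<Prod>r=0..<d^2. V (r div d, p r) * W (p r, r mod d)))"
  unfolding Fdet_def
  by (subst det_def'[OF Amat_carrier]) (auto intro!: sum.cong prod.cong simp: Amat_def permutes_in_image)

lemma idx_bounds:
  fixes r d :: nat
  assumes "r < d^2"
  shows "r div d < d" "r mod d < d"
proof -
  have "d > 0" using assms by (cases d) auto
  then show "r mod d < d" by simp
  show "r div d < d" using assms by (simp add: power2_eq_square less_mult_imp_div_less)
qed

lemma Fdet_polyW: "polyfun ({0..<d^2} \<times> {0..<d}) (\<lambda>W. Fdet d W V)"
  unfolding Fdet_expand
  by (intro polyfun_sum polyfun_prod polyfun.pmult polyfun.pconst polyfun.pvar)
     (auto simp: permutes_in_image idx_bounds)

lemma Fdet_polyV: "polyfun ({0..<d} \<times> {0..<d^2}) (\<lambda>V. Fdet d W V)"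
  unfolding Fdet_expand
  by (intro polyfun_sum polyfun_prod polyfun.pmult polyfun.pconst polyfun.pvar)
     (auto simp: permutes_in_image idx_bounds)

lemma Fdet_nonzero:
  "Fdet d (\<lambda>(k,j). if k mod d = j then 1 else 0) (\<lambda>(i,k). if k div d = i then 1 else 0) \<noteq> 0"
proof -
  have "Amat d (\<lambda>(k,j). if k mod d = j then 1 else 0) (\<lambda>(i,k). if k div d = i then 1 else 0) = 1\<^sub>m (d^2)"
  proof (rule eq_matI)
    fix r k assume rk: "r < dim_row (1\<^sub>m (d^2) :: real mat)" "k < dim_col (1\<^sub>m (d^2) :: real mat)"
    have "(k div d = r div d \<and> r mod d = k mod d) \<longleftrightarrow> r = k"
      by (metis div_mult_mod_eq)
    then show "Amat d (\<lambda>(k,j). if k mod d = j then 1 else 0) (\<lambda>(i,k). if k div d = i then 1 else 0) $$ (r, k)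
        = 1\<^sub>m (d^2) $$ (r, k)"
      using rk by (auto simp: Amat_def)
  qed (auto simp: Amat_def)
  then show ?thesis unfolding Fdet_def by simp
qed

lemma Fdet_solve:
  assumes "Fdet d W V \<noteq> 0"
  shows "\<exists>g. \<forall>i<d. \<forall>j<d. (\<Sum>k<d^2. V (i,k) * W (k,j) * g k) = c i j"
proof -
  let ?n = "d^2"
  let ?A = "Amat d W V"
  have "Determinant.det ?A \<noteq> 0" using assms by (simp add: Fdet_def)
  from det_non_zero_imp_unit[OF Amat_carrier this, unfolded Units_def, of "()"]
  obtain B where B: "B \<in> carrier_mat ?n ?n" and AB: "?A * B = 1\<^sub>m ?n"
    by (auto simp: ring_mat_def)
  define t where "t = Matrix.vec ?n (\<lambda>r. c (r div d) (r mod d))"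
  define gv where "gv = B *\<^sub>v t"
  have t: "t \<in> carrier_vec ?n" by (simp add: t_def)
  have "?A *\<^sub>v gv = t"
    unfolding gv_def using assoc_mult_mat_vec[OF Amat_carrier[of d W V] B t] AB t by (simp add: one_mult_mat_vec)
  then have key: "(\<Sum>k<?n. V (r div d, k) * W (k, r mod d) * gv $ k) = c (r div d) (r mod d)"
    if "r < ?n" for r
  proof -
    have "(?A *\<^sub>v gv) $ r = t $ r" using \<open>?A *\<^sub>v gv = t\<close> by simp
    moreover have "dim_vec gv = ?n" using B by (simp add: gv_def)
    ultimately show ?thesis using that
      by (simp add: t_def Amat_def scalar_prod_def atLeast0LessThan mult.assoc)
  qed
  show ?thesis
  proof (intro exI[of _ "\<lambda>k. gv $ k"] allI impI)
    fix i j assume ij: "i < d" "j < d"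
    have r: "i * d + j < ?n"
    proof -
      have "i * d + j < (i + 1) * d" using ij by simp
      also have "\<dots> \<le> d * d" using ij by (intro mult_le_mono1) simp
      finally show ?thesis by (simp add: power2_eq_square)
    qed
    have "(i * d + j) div d = i" "(i * d + j) mod d = j" using ij by auto
    with key[OF r] show "(\<Sum>k<?n. V (i,k) * W (k,j) * gv $ k) = c i j" by simp
  qed
qed

lemma net_construct:
  assumes s: "s \<noteq> 0" and s': "s' \<noteq> 0"
    and G: "\<forall>i<d. \<forall>j<d. (\<Sum>k<d^2. V (i,k) * W (k,j) * g k) = s * gs i * Ws (i,j)"
  shows "\<exists>g b g' b'. \<forall>x. sqrt (\<Sum>j<d. (x j)^2) \<le> 1 \<longrightarrow>
             (\<forall>i<d. bn_two_layer d W V mu s mu' s' g b g' b' x i = one_layer d Ws gs bs x i)"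
proof -
  define R where "R k = (\<Sum>j<d. \<bar>W (k,j)\<bar>)" for k
  define b where "b k = \<bar>g k\<bar> * (R k + \<bar>mu k\<bar>) / \<bar>s\<bar> + 1" for k
  define C where "C i = (\<Sum>k<d^2. V (i,k) * (b k - g k * mu k / s))" for i
  show ?thesis
  proof (rule exI[of _ g], rule exI[of _ b], rule exI[of _ "\<lambda>_. s'"], rule exI[of _ "\<lambda>i. bs i + mu' i - C i"], intro allI impI)
    fix x :: "nat \<Rightarrow> real" and i :: nat
    assume nx: "sqrt (\<Sum>j<d. (x j)^2) \<le> 1" and i: "i < d"
    define L where "L k = (\<Sum>j<d. W (k,j) * x j)" for k
    have xb: "\<bar>x j\<bar> \<le> 1" if "j < d" for j
    proof -
      have "(x j)^2 \<le> (\<Sum>j<d. (x j)^2)" by (rule member_le_sum) (use that in auto)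
      also have "\<dots> \<le> 1" using nx by simp
      finally show ?thesis by (simp add: abs_square_le_1)
    qed
    have Lb: "\<bar>L k\<bar> \<le> R k" for k
    proof -
      have "\<bar>L k\<bar> \<le> (\<Sum>j<d. \<bar>W (k,j) * x j\<bar>)" unfolding L_def by (rule sum_abs)
      also have "\<dots> \<le> R k" unfolding R_def
        by (intro sum_mono) (auto simp: abs_mult intro: mult_left_le xb)
      finally show ?thesis .
    qed
    have z: "relu (g k * ((L k - mu k) / s) + b k) = g k * ((L k - mu k) / s) + b k" for k
    proof -
      have "\<bar>L k - mu k\<bar> \<le> R k + \<bar>mu k\<bar>" using Lb[of k] by linarith
      then have "\<bar>g k\<bar> * \<bar>L k - mu k\<bar> / \<bar>s\<bar> \<le> \<bar>g k\<bar> * (R k + \<bar>mu k\<bar>) / \<bar>s\<bar>"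
        by (intro divide_right_mono mult_left_mono) auto
      moreover have "\<bar>g k * ((L k - mu k) / s)\<bar> = \<bar>g k\<bar> * \<bar>L k - mu k\<bar> / \<bar>s\<bar>"
        by (simp add: abs_mult)
      moreover have "- \<bar>g k * ((L k - mu k) / s)\<bar> \<le> g k * ((L k - mu k) / s)" using abs_ge_self[of "- (g k * ((L k - mu k) / s))"] by simp
      ultimately have "0 \<le> g k * ((L k - mu k) / s) + b k" unfolding b_def by linarith
      then show ?thesis by (simp add: relu_def)
    qed
    have swap: "(\<Sum>k<d^2. V (i,k) * g k * L k) = (\<Sum>j<d. x j * (\<Sum>k<d^2. V (i,k) * W (k,j) * g k))"
      unfolding L_def by (simp add: sum_distrib_left sum_distrib_right mult_ac sum.swap[of _ "{..<d}"])
    also have "\<dots> = (\<Sum>j<d. x j * (s * gs i * Ws (i,j)))"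
      using G i by (intro sum.cong) auto
    also have "\<dots> = s * (gs i * (\<Sum>j<d. Ws (i,j) * x j))"
      by (simp add: sum_distrib_left mult_ac)
    finally have T: "(\<Sum>k<d^2. V (i,k) * g k * L k) / s = gs i * (\<Sum>j<d. Ws (i,j) * x j)"
      using s by simp
    have "(\<Sum>k<d^2. V (i,k) * (g k * ((L k - mu k) / s) + b k))
        = (\<Sum>k<d^2. V (i,k) * g k * L k / s + V (i,k) * (b k - g k * mu k / s))"
      using s by (intro sum.cong) (auto simp: field_simps)
    also have "\<dots> = (\<Sum>k<d^2. V (i,k) * g k * L k) / s + C i"
      by (simp add: sum.distrib sum_divide_distrib C_def)
    finally have H: "(\<Sum>k<d^2. V (i,k) * (g k * ((L k - mu k) / s) + b k))
        = gs i * (\<Sum>j<d. Ws (i,j) * x j) + C i" using T by simp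
    show "bn_two_layer d W V mu s mu' s' g b (\<lambda>_. s') (\<lambda>i. bs i + mu' i - C i) x i = one_layer d Ws gs bs x i"
      unfolding bn_two_layer_def one_layer_def Let_def L_def[symmetric] z H
      using s' by simp
  qed
qed

lemma fst_comp_meas:
  assumes "a \<in> I" "sets (M a) = sets borel"
  shows "(\<lambda>x. fst x a) \<in> borel_measurable (PiM I M \<Otimes>\<^sub>M N)"
proof -
  have "(\<lambda>x. fst x a) \<in> PiM I M \<Otimes>\<^sub>M N \<rightarrow>\<^sub>M M a"
    by (rule measurable_compose[OF measurable_fst measurable_component_singleton[OF assms(1)]])
  then show ?thesis using assms(2) measurable_cong_sets by blast
qed

lemma snd_comp_meas:
  assumes "a \<in> I" "sets (M a) = sets borel"
  shows "(\<lambda>x. snd x a) \<in> borel_measurable (N \<Otimes>\<^sub>M PiM I M)"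
proof -
  have "(\<lambda>x. snd x a) \<in> N \<Otimes>\<^sub>M PiM I M \<rightarrow>\<^sub>M M a"
    by (rule measurable_compose[OF measurable_snd measurable_component_singleton[OF assms(1)]])
  then show ?thesis using assms(2) measurable_cong_sets by blast
qed

theorem lemma4p1:
  fixes d :: nat and D1 D2 :: "real measure"
    and Ws :: "nat \<times> nat \<Rightarrow> real" and gs bs :: "nat \<Rightarrow> real"
    and mu mu' :: "nat \<Rightarrow> real" and s s' :: real
  assumes "cont_bounded_dist D1" and "cont_bounded_dist D2"
    and "s \<noteq> 0" and "s' \<noteq> 0"
  shows "AE WV in (PiM ({0..<d^2} \<times> {0..<d}) (\<lambda>_. D1) \<Otimes>\<^sub>M PiM ({0..<d} \<times> {0..<d^2}) (\<lambda>_. D2)).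
           \<exists>g b g' b'. \<forall>x. sqrt (\<Sum>j<d. (x j)^2) \<le> 1 \<longrightarrow>
             (\<forall>i<d. bn_two_layer d (fst WV) (snd WV) mu s mu' s' g b g' b' x i
                     = one_layer d Ws gs bs x i)"
proof -
  let ?N1 = "PiM ({0..<d^2} \<times> {0..<d}) (\<lambda>_. D1)"
  let ?N2 = "PiM ({0..<d} \<times> {0..<d^2}) (\<lambda>_. D2)"
  have D1: "prob_space D1" "sets D1 = sets borel" "\<And>a. measure D1 {a} = 0"
    using assms(1) unfolding cont_bounded_dist_def by auto
  have D2: "prob_space D2" "sets D2 = sets borel" "\<And>a. measure D2 {a} = 0"
    using assms(2) unfolding cont_bounded_dist_def by auto
  define W0 :: "nat \<times> nat \<Rightarrow> real" where "W0 = (\<lambda>(k,j). if k mod d = j then 1 else 0)"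
  define V0 :: "nat \<times> nat \<Rightarrow> real" where "V0 = (\<lambda>(i,k). if k div d = i then 1 else 0)"
  have nz: "Fdet d W0 V0 \<noteq> 0" unfolding W0_def V0_def by (rule Fdet_nonzero)
  have AW: "AE W in ?N1. Fdet d W V0 \<noteq> 0"
    by (rule polyfun_AE[OF _ _ _ _ Fdet_polyW[of d V0] nz]) (use D1 in auto)
  have AV: "AE V in ?N2. Fdet d W V \<noteq> 0" if "Fdet d W V0 \<noteq> 0" for W
    by (rule polyfun_AE[OF _ _ _ _ Fdet_polyV[of d W] that]) (use D2 in auto)
  have AEWV: "AE W in ?N1. AE V in ?N2. Fdet d W V \<noteq> 0"
    using AW by eventually_elim (rule AV)
  interpret pair_sigma_finite ?N1 ?N2
    using D1(1) D2(1) by (intro pair_sigma_finite.intro prob_space_imp_sigma_finite prob_space_PiM) auto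
  have Fm: "(\<lambda>x. Fdet d (fst x) (snd x)) \<in> borel_measurable (?N1 \<Otimes>\<^sub>M ?N2)"
    unfolding Fdet_expand
    by (intro borel_measurable_sum borel_measurable_prod borel_measurable_times borel_measurable_const
        fst_comp_meas snd_comp_meas)
       (auto simp: permutes_in_image idx_bounds D1(2) D2(2))
  have S: "{x \<in> space (?N1 \<Otimes>\<^sub>M ?N2). Fdet d (fst x) (snd x) \<noteq> 0} \<in> sets (?N1 \<Otimes>\<^sub>M ?N2)"
    by (rule pred_nonzero[OF Fm])
  have "AE x in ?N1 \<Otimes>\<^sub>M ?N2. Fdet d (fst x) (snd x) \<noteq> 0"
    by (rule AE_pair_measure[OF S]) (simp add: AEWV)
  then show ?thesis
  proof eventually_elim
    case (elim WV)
    from Fdet_solve[OF elim, of "\<lambda>i j. s * gs i * Ws (i,j)"] obtain g where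
      "\<forall>i<d. \<forall>j<d. (\<Sum>k<d^2. snd WV (i,k) * fst WV (k,j) * g k) = s * gs i * Ws (i,j)" by blast
    from net_construct[OF assms(3,4) this] show ?case .
  qed
qed

end
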